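(* Let $\mathcal{A}=\langle Q,\Sigma,\delta\rangle$ be an $n$-state DFA whose transition monoid is $T_n$, let $x\in\Sigma$ be a fixed letter of rank $n-1$, and let $k\ge 0$. If the digraph $\Gamma_k$ is strongly connected, then every proper non-empty subset $R\subset Q$ can be extended by some word of length at most $k+1$.
   Context: Words act on states letter by letter from left to right. The transition monoid is the monoid of transformations of $Q$ generated by the letters; $T_n$ is the monoid of all self-maps of an $n$-element set. A letter has rank $n-1$ if $|Q\cdot x|=n-1$. For such $x$, $\mathrm{excl}(x)$ is the unique state in $Q\setminus Q\cdot x$, and $\mathrm{dupl}(x)$ is the unique state $p$ with $p=q_1\cdot x=q_2\cdot x$ for some $q_1\ne q_2$. For a proper non-empty $R\subset Q$ and a word $w$, $R$ can be extended by $w$ if $|Rw^{-1}|>|R|$, where $Rw^{-1}=\{q\in Q\mid q\cdot w\in R\}$. Let $\Pi\subseteq\Sigma$ be the set of letters acting as permutations of $Q$, and $\Pi^i$ the set of words of length at most $i$ over $\Pi$ (including the empty word). $\Gamma_i$ is the digraph with vertex set $Q$ and edge set $E_i=\{(\mathrm{excl}(x)\cdot w,\ \mathrm{dupl}(x)\cdot w)\mid w\in\Pi^i\}$. *)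

theory Defs
  imports Main
begin

definition is_dfa :: "'q set \<Rightarrow> 'a set \<Rightarrow> ('q \<Rightarrow> 'a \<Rightarrow> 'q) \<Rightarrow> bool" where
  "is_dfa Q Sg delta \<longleftrightarrow> finite Q \<and> Q \<noteq> {} \<and> finite Sg \<and>
     (\<forall>q\<in>Q. \<forall>a\<in>Sg. delta q a \<in> Q)"

definition act :: "('q \<Rightarrow> 'a \<Rightarrow> 'q) \<Rightarrow> 'q \<Rightarrow> 'a list \<Rightarrow> 'q" where
  "act delta q w = foldl delta q w"

definition full_transition_monoid :: "'q set \<Rightarrow> 'a set \<Rightarrow> ('q \<Rightarrow> 'a \<Rightarrow> 'q) \<Rightarrow> bool" where
  "full_transition_monoid Q Sg delta \<longleftrightarrow>
     (\<forall>f. (\<forall>q\<in>Q. f q \<in> Q) \<longrightarrow> (\<exists>w. set w \<subseteq> Sg \<and> (\<forall>q\<in>Q. act delta q w = f q)))"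

definition letter_rank :: "'q set \<Rightarrow> ('q \<Rightarrow> 'a \<Rightarrow> 'q) \<Rightarrow> 'a \<Rightarrow> nat" where
  "letter_rank Q delta x = card ((\<lambda>q. delta q x) ` Q)"

definition excl :: "'q set \<Rightarrow> ('q \<Rightarrow> 'a \<Rightarrow> 'q) \<Rightarrow> 'a \<Rightarrow> 'q" where
  "excl Q delta x = (THE p. p \<in> Q - (\<lambda>q. delta q x) ` Q)"

definition dupl :: "'q set \<Rightarrow> ('q \<Rightarrow> 'a \<Rightarrow> 'q) \<Rightarrow> 'a \<Rightarrow> 'q" where
  "dupl Q delta x = (THE p. \<exists>q1\<in>Q. \<exists>q2\<in>Q. q1 \<noteq> q2 \<and> delta q1 x = p \<and> delta q2 x = p)"

definition perm_letters :: "'q set \<Rightarrow> 'a set \<Rightarrow> ('q \<Rightarrow> 'a \<Rightarrow> 'q) \<Rightarrow> 'a set" where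
  "perm_letters Q Sg delta = {a \<in> Sg. bij_betw (\<lambda>q. delta q a) Q Q}"

definition gamma_edges :: "'q set \<Rightarrow> 'a set \<Rightarrow> ('q \<Rightarrow> 'a \<Rightarrow> 'q) \<Rightarrow> 'a \<Rightarrow> nat \<Rightarrow> ('q \<times> 'q) set" where
  "gamma_edges Q Sg delta x i =
     {(act delta (excl Q delta x) w, act delta (dupl Q delta x) w) | w.
        set w \<subseteq> perm_letters Q Sg delta \<and> length w \<le> i}"

definition strongly_connected_on :: "'q set \<Rightarrow> ('q \<times> 'q) set \<Rightarrow> bool" where
  "strongly_connected_on V E \<longleftrightarrow> (\<forall>p\<in>V. \<forall>q\<in>V. (p, q) \<in> (E \<inter> (V \<times> V))\<^sup>*)"

definition preimage_word :: "'q set \<Rightarrow> ('q \<Rightarrow> 'a \<Rightarrow> 'q) \<Rightarrow> 'q set \<Rightarrow> 'a list \<Rightarrow> 'q set" where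
  "preimage_word Q delta R w = {q \<in> Q. act delta q w \<in> R}"

definition can_be_extended :: "'q set \<Rightarrow> ('q \<Rightarrow> 'a \<Rightarrow> 'q) \<Rightarrow> 'q set \<Rightarrow> 'a list \<Rightarrow> bool" where
  "can_be_extended Q delta R w \<longleftrightarrow> card (preimage_word Q delta R w) > card R"

end

theory Submission
  imports Defs
begin

lemma act_cons: "act delta q (a#w) = act delta (delta q a) w"
  by (simp add: act_def)

lemma act_perm_bij:
  "set w \<subseteq> perm_letters Q Sg delta \<Longrightarrow> bij_betw (\<lambda>q. act delta q w) Q Q"
proof (induction w)
  case Nil
  then show ?case by (simp add: act_def bij_betw_id[unfolded id_def])
next
  case (Cons a w)
  then have b1: "bij_betw (\<lambda>q. delta q a) Q Q" and b2: "bij_betw (\<lambda>q. act delta q w) Q Q"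
    by (auto simp: perm_letters_def)
  have "bij_betw ((\<lambda>q. act delta q w) \<circ> (\<lambda>q. delta q a)) Q Q"
    using bij_betw_trans[OF b1 b2] .
  then show ?case by (simp add: act_cons o_def)
qed

lemma crossing:
  assumes "(p,q) \<in> E\<^sup>*" "p \<notin> R" "q \<in> R"
  shows "\<exists>u v. (u,v) \<in> E \<and> u \<notin> R \<and> v \<in> R"
  using assms
proof (induction rule: rtrancl_induct)
  case base then show ?case by simp
next
  case (step y z)
  then show ?case by (cases "y \<in> R") auto
qed

theorem lemma1:
  fixes Q :: "'q set" and Sg :: "'a set" and delta :: "'q \<Rightarrow> 'a \<Rightarrow> 'q"
    and x :: 'a and k :: nat
  assumes "is_dfa Q Sg delta"
    and "full_transition_monoid Q Sg delta"
    and "x \<in> Sg"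
    and "letter_rank Q delta x = card Q - 1"
    and "strongly_connected_on Q (gamma_edges Q Sg delta x k)"
  shows "\<forall>R. R \<subset> Q \<and> R \<noteq> {} \<longrightarrow>
           (\<exists>w. set w \<subseteq> Sg \<and> length w \<le> k + 1 \<and> can_be_extended Q delta R w)"
proof (intro allI impI)
  fix R assume RQ: "R \<subset> Q \<and> R \<noteq> {}"
  define f where "f = (\<lambda>q. delta q x)"
  have fin: "finite Q" using assms(1) by (simp add: is_dfa_def)
  have fQ: "f ` Q \<subseteq> Q" using assms(1,3) by (auto simp: is_dfa_def f_def)
  have rk: "card (f ` Q) = card Q - 1" using assms(4) by (simp add: letter_rank_def f_def)
  from RQ obtain p0 q0 where p0: "p0 \<in> Q" "p0 \<notin> R" and q0: "q0 \<in> R" by blast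
  have q0Q: "q0 \<in> Q" using RQ q0 by blast
  have n2: "card Q \<ge> 2"
  proof -
    have "{p0,q0} \<subseteq> Q" using p0 q0Q by auto
    moreover have "p0 \<noteq> q0" using p0 q0 by auto
    ultimately have "card {p0,q0} \<le> card Q" "card {p0,q0} = 2" using card_mono[OF fin, of "{p0,q0}"] by auto
    then show ?thesis by simp
  qed
  have "card (Q - f ` Q) = 1"
    using card_Diff_subset[OF finite_imageI[OF fin] fQ] rk n2 by simp
  then obtain e where e: "Q - f ` Q = {e}" by (auto simp: card_1_singleton_iff)
  have exc: "excl Q delta x = e"
    unfolding excl_def f_def[symmetric] using e by auto
  have sumc: "card Q = (\<Sum>b\<in>f ` Q. card {a \<in> Q. f a = b})"
    using sum.group[OF fin finite_imageI[OF fin] subset_refl, where g=f and h="\<lambda>_. 1::nat"]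
    by simp
  have ge1: "\<And>b. b \<in> f ` Q \<Longrightarrow> card {a \<in> Q. f a = b} \<ge> 1"
  proof -
    fix b assume "b \<in> f ` Q"
    then have "{a \<in> Q. f a = b} \<noteq> {}" by auto
    then show "card {a \<in> Q. f a = b} \<ge> 1" using fin
      by (simp add: Suc_le_eq card_gt_0_iff)
  qed
  have two: "\<And>d q1 q2. q1 \<in> Q \<Longrightarrow> q2 \<in> Q \<Longrightarrow> q1 \<noteq> q2 \<Longrightarrow> f q1 = d \<Longrightarrow> f q2 = d
      \<Longrightarrow> card {a \<in> Q. f a = d} \<ge> 2"
  proof -
    fix d q1 q2 assume h: "q1 \<in> Q" "q2 \<in> Q" "q1 \<noteq> q2" "f q1 = d" "f q2 = d"
    have "{q1,q2} \<subseteq> {a \<in> Q. f a = d}" using h by auto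
    then have "card {q1,q2} \<le> card {a \<in> Q. f a = d}" by (rule card_mono[rotated]) (use fin in auto)
    then show "card {a \<in> Q. f a = d} \<ge> 2" using h by simp
  qed
  have ninj: "\<not> inj_on f Q"
    using inj_on_iff_eq_card[OF fin, of f] rk n2 by simp
  then obtain q1 q2 where qq: "q1 \<in> Q" "q2 \<in> Q" "q1 \<noteq> q2" "f q1 = f q2"
    by (auto simp: inj_on_def)
  define d where "d = f q1"
  have uniq: "\<And>d'. (\<exists>r1\<in>Q. \<exists>r2\<in>Q. r1 \<noteq> r2 \<and> f r1 = d' \<and> f r2 = d') \<Longrightarrow> d' = d"
  proof (rule ccontr)
    fix d' assume h: "\<exists>r1\<in>Q. \<exists>r2\<in>Q. r1 \<noteq> r2 \<and> f r1 = d' \<and> f r2 = d'" and ne: "d' \<noteq> d"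
    then obtain r1 r2 where r: "r1 \<in> Q" "r2 \<in> Q" "r1 \<noteq> r2" "f r1 = d'" "f r2 = d'" by blast
    have c1: "card {a \<in> Q. f a = d} \<ge> 2" using two[OF qq(1-3)] qq(4) d_def by simp
    have c2: "card {a \<in> Q. f a = d'} \<ge> 2" using two[OF r] .
    have dQ: "d \<in> f ` Q" "d' \<in> f ` Q" using qq r d_def by auto
    let ?c = "\<lambda>b. card {a \<in> Q. f a = b}"
    have fA: "finite (f ` Q)" using fin by simp
    have "(\<Sum>b\<in>f ` Q. ?c b) = ?c d + ?c d' + (\<Sum>b\<in>f ` Q - {d,d'}. ?c b)"
    proof -
      have "(\<Sum>b\<in>f ` Q. ?c b) = (\<Sum>b\<in>{d,d'}. ?c b) + (\<Sum>b\<in>f ` Q - {d,d'}. ?c b)"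
        using sum.subset_diff[of "{d,d'}" "f ` Q" ?c] fA dQ by auto
      then show ?thesis using ne by simp
    qed
    moreover have "(\<Sum>b\<in>f ` Q - {d,d'}. ?c b) \<ge> (\<Sum>b\<in>f ` Q - {d,d'}. 1)"
      by (rule sum_mono) (use ge1 in auto)
    moreover have "card (f ` Q - {d,d'}) = card (f ` Q) - 2"
      using dQ ne fA by (simp add: card_Diff_subset)
    moreover have "(\<Sum>b\<in>f ` Q - {d,d'}. (1::nat)) = card (f ` Q - {d,d'})" by simp
    moreover have "card {d,d'} \<le> card (f ` Q)" using dQ fA by (intro card_mono) auto
    moreover have "card {d,d'} = 2" using ne by simp
    ultimately show False using sumc c1 c2 rk by linarith
  qed
  have dup: "dupl Q delta x = d"
  proof -
    have u2: "\<And>d'. (\<exists>r1\<in>Q. \<exists>r2\<in>Q. r1 \<noteq> r2 \<and> delta r1 x = d' \<and> delta r2 x = d') \<Longrightarrow> d' = d"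
      by (rule uniq[unfolded f_def])
    have ex: "\<exists>r1\<in>Q. \<exists>r2\<in>Q. r1 \<noteq> r2 \<and> delta r1 x = d \<and> delta r2 x = d"
    proof (intro bexI conjI)
      show "q1 \<in> Q" "q2 \<in> Q" "q1 \<noteq> q2" using qq by auto
      show "delta q1 x = d" "delta q2 x = d" using qq by (auto simp: d_def f_def)
    qed
    show ?thesis unfolding dupl_def using ex u2 by (rule the_equality)
  qed
  let ?E = "gamma_edges Q Sg delta x k \<inter> Q \<times> Q"
  have "(p0,q0) \<in> ?E\<^sup>*" using assms(5) p0 q0Q by (simp add: strongly_connected_on_def)
  from crossing[OF this p0(2) q0] obtain u v where uv: "(u,v) \<in> ?E" "u \<notin> R" "v \<in> R" by blast
  then obtain w where w: "u = act delta e w" "v = act delta d w"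
      "set w \<subseteq> perm_letters Q Sg delta" "length w \<le> k"
    by (auto simp: gamma_edges_def exc dup)
  define g where "g = (\<lambda>q. act delta q w)"
  have bg: "bij_betw g Q Q" using act_perm_bij[OF w(3)] by (simp add: g_def)
  define T where "T = {q \<in> Q. g q \<in> R}"
  have eQ: "e \<in> Q" using e by auto
  have dQ: "d \<in> Q" using qq fQ d_def by auto
  have eT: "e \<notin> T" using uv w by (simp add: T_def g_def)
  have dT: "d \<in> T" using uv w dQ by (simp add: T_def g_def)
  have cT: "card T = card R"
  proof -
    have "g ` T = R"
    proof
      show "g ` T \<subseteq> R" by (auto simp: T_def)
      show "R \<subseteq> g ` T"
      proof
        fix r assume "r \<in> R"
        then have "r \<in> Q" using RQ by blast
        then obtain q where "q \<in> Q" "g q = r" using bg by (metis bij_betw_imp_surj_on imageE)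
        then show "r \<in> g ` T" using \<open>r \<in> R\<close> by (auto simp: T_def)
      qed
    qed
    moreover have "inj_on g T"
      by (rule inj_on_subset[OF bij_betw_imp_inj_on[OF bg]]) (auto simp: T_def)
    ultimately show ?thesis using card_image[of g T] by simp
  qed
  define P where "P = {q \<in> Q. f q \<in> T}"
  have dx: "\<And>q. q \<in> Q \<Longrightarrow> delta q x \<in> Q" using fQ f_def by auto
  have pre: "preimage_word Q delta R (x#w) = P"
    using dx by (auto simp: preimage_word_def P_def T_def act_cons f_def g_def)
  have "f ` P = T"
  proof
    show "f ` P \<subseteq> T" by (auto simp: P_def)
    show "T \<subseteq> f ` P"
    proof
      fix t assume t: "t \<in> T"
      then have "t \<in> Q" "t \<noteq> e" using eT by (auto simp: T_def)
      then have "t \<in> f ` Q" using e by blast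
      then show "t \<in> f ` P" using t by (auto simp: P_def)
    qed
  qed
  moreover have "\<not> inj_on f P"
  proof -
    have "q1 \<in> P" "q2 \<in> P" using qq dT d_def by (auto simp: P_def)
    then show ?thesis using qq by (auto simp: inj_on_def)
  qed
  moreover have "finite P" using fin by (simp add: P_def)
  ultimately have "card T < card P"
  proof -
    assume a: "f ` P = T" "\<not> inj_on f P" "finite P"
    have "card (f ` P) \<le> card P" using card_image_le[OF a(3)] .
    moreover have "card (f ` P) \<noteq> card P" using inj_on_iff_eq_card[OF a(3), of f] a(2) by simp
    ultimately show ?thesis using a(1) by simp
  qed
  then have "can_be_extended Q delta R (x#w)"
    by (simp add: can_be_extended_def pre cT[symmetric])
  moreover have "set (x#w) \<subseteq> Sg" using w(3) assms(3) by (auto simp: perm_letters_def)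
  moreover have "length (x#w) \<le> k+1" using w(4) by simp
  ultimately show "\<exists>w. set w \<subseteq> Sg \<and> length w \<le> k + 1 \<and> can_be_extended Q delta R w" by blast
qed

end
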